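(* Let $\mathcal{E}_\theta$ ($\theta\in[0,\pi/2]$) be the qubit channel with Kraus operators $E_0=\sqrt{\eta_\theta}\,E$, $E_1=\sqrt{1-\eta_\theta}\,ZE$, where $E=\begin{pmatrix}\cos\theta&\sin\theta\\-\sin\theta&\cos\theta\end{pmatrix}$, $Z=\mathrm{diag}(1,-1)$ and $\eta_\theta\in[0,1]$ is arbitrary. For $n\ge1$ let $E_n$ be the set of $n$-bit strings of even Hamming weight, $w(i)$ the Hamming weight, and $|\Psi_n\rangle=2^{-(n-1)/2}\sum_{i\in E_n}(-1)^{w(i)/2}|i\rangle$. Apply $\mathcal{E}_\theta^{\otimes n}$ to $|\Psi_n\rangle\langle\Psi_n|$ and measure all $n$ qubits in the computational basis. Then the probability that the outcome string has even parity is exactly $\cos^2(n\theta)$. *)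

theory Defs
  imports Complex_Main
begin

text \<open>Computational basis of n qubits: bit strings = bool lists of length n
  (False = |0>, True = |1>). Operators / density matrices on n qubits are
  complex-valued functions of (row, column) bit strings.\<close>

definition bitstrings :: "nat \<Rightarrow> bool list set" where
  "bitstrings n = {i. length i = n}"

definition hweight :: "bool list \<Rightarrow> nat" where
  "hweight i = length (filter id i)"

definition even_strings :: "nat \<Rightarrow> bool list set" where
  "even_strings n = {i \<in> bitstrings n. even (hweight i)}"

definition Emat :: "real \<Rightarrow> bool \<Rightarrow> bool \<Rightarrow> complex" where
  "Emat \<theta> r c =
     (if \<not> r \<and> \<not> c then complex_of_real (cos \<theta>)
      else if \<not> r \<and> c then complex_of_real (sin \<theta>)
      else if r \<and> \<not> c then complex_of_real (- sin \<theta>)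
      else complex_of_real (cos \<theta>))"

definition Zmat :: "bool \<Rightarrow> bool \<Rightarrow> complex" where
  "Zmat r c = (if r \<noteq> c then 0 else if r then -1 else 1)"

definition matmul2 :: "(bool \<Rightarrow> bool \<Rightarrow> complex) \<Rightarrow> (bool \<Rightarrow> bool \<Rightarrow> complex) \<Rightarrow> bool \<Rightarrow> bool \<Rightarrow> complex" where
  "matmul2 A B r c = (\<Sum>k\<in>(UNIV::bool set). A r k * B k c)"

definition kraus :: "real \<Rightarrow> real \<Rightarrow> bool \<Rightarrow> bool \<Rightarrow> bool \<Rightarrow> complex" where
  "kraus \<eta> \<theta> k r c =
     (if \<not> k then complex_of_real (sqrt \<eta>) * Emat \<theta> r c
      else complex_of_real (sqrt (1 - \<eta>)) * matmul2 Zmat (Emat \<theta>) r c)"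

definition kraus_tensor :: "real \<Rightarrow> real \<Rightarrow> nat \<Rightarrow> bool list \<Rightarrow> bool list \<Rightarrow> bool list \<Rightarrow> complex" where
  "kraus_tensor \<eta> \<theta> n ks x i = (\<Prod>j<n. kraus \<eta> \<theta> (ks ! j) (x ! j) (i ! j))"

definition channel_n :: "real \<Rightarrow> real \<Rightarrow> nat \<Rightarrow> (bool list \<Rightarrow> bool list \<Rightarrow> complex) \<Rightarrow> bool list \<Rightarrow> bool list \<Rightarrow> complex" where
  "channel_n \<eta> \<theta> n \<rho> x y =
     (\<Sum>ks\<in>bitstrings n. \<Sum>i\<in>bitstrings n. \<Sum>i'\<in>bitstrings n.
        kraus_tensor \<eta> \<theta> n ks x i * \<rho> i i' * cnj (kraus_tensor \<eta> \<theta> n ks y i'))"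

definition Psi :: "nat \<Rightarrow> bool list \<Rightarrow> complex" where
  "Psi n i = (if i \<in> even_strings n
      then complex_of_real (2 powr (- (real n - 1) / 2) * (-1) ^ (hweight i div 2)) else 0)"

definition proj :: "(bool list \<Rightarrow> complex) \<Rightarrow> bool list \<Rightarrow> bool list \<Rightarrow> complex" where
  "proj \<psi> i i' = \<psi> i * cnj (\<psi> i')"

definition prob_even_parity :: "nat \<Rightarrow> (bool list \<Rightarrow> bool list \<Rightarrow> complex) \<Rightarrow> real" where
  "prob_even_parity n \<rho> = (\<Sum>x\<in>even_strings n. Re (\<rho> x x))"

end

theory Submission
  imports Defs
begin

lemma bitstrings_0: "bitstrings 0 = {[]}"
  by (auto simp: bitstrings_def)

lemma bitstrings_Suc:
  "bitstrings (Suc n) = Cons False ` bitstrings n \<union> Cons True ` bitstrings n"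
proof
  show "bitstrings (Suc n) \<subseteq> Cons False ` bitstrings n \<union> Cons True ` bitstrings n"
  proof
    fix xs assume "xs \<in> bitstrings (Suc n)"
    then obtain b l where "xs = b # l" "length l = n"
      by (auto simp: bitstrings_def length_Suc_conv)
    then show "xs \<in> Cons False ` bitstrings n \<union> Cons True ` bitstrings n"
      by (cases b) (auto simp: bitstrings_def)
  qed
qed (auto simp: bitstrings_def)

lemma finite_bitstrings: "finite (bitstrings n)"
  by (induction n) (auto simp: bitstrings_0 bitstrings_Suc)

lemma sum_bitstrings_Suc:
  "(\<Sum>x\<in>bitstrings (Suc n). g x) =
     (\<Sum>l\<in>bitstrings n. g (False # l)) + (\<Sum>l\<in>bitstrings n. g (True # l))"
proof -
  have "(\<Sum>x\<in>bitstrings (Suc n). g x) =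
     (\<Sum>x\<in>Cons False ` bitstrings n. g x) + (\<Sum>x\<in>Cons True ` bitstrings n. g x)"
    unfolding bitstrings_Suc
    by (rule sum.union_disjoint) (auto simp: finite_bitstrings)
  also have "\<dots> = (\<Sum>l\<in>bitstrings n. g (False # l)) + (\<Sum>l\<in>bitstrings n. g (True # l))"
    by (simp add: sum.reindex)
  finally show ?thesis .
qed

lemma sum_prod_bitstrings:
  fixes f :: "nat \<Rightarrow> bool \<Rightarrow> 'a::comm_semiring_1"
  shows "(\<Sum>i\<in>bitstrings n. \<Prod>j<n. f j (i ! j)) = (\<Prod>j<n. f j False + f j True)"
proof (induction n arbitrary: f)
  case 0
  then show ?case by (simp add: bitstrings_0)
next
  case (Suc n)
  have "(\<Sum>i\<in>bitstrings (Suc n). \<Prod>j<Suc n. f j (i ! j)) =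
    f 0 False * (\<Sum>l\<in>bitstrings n. \<Prod>j<n. f (Suc j) (l ! j)) +
    f 0 True * (\<Sum>l\<in>bitstrings n. \<Prod>j<n. f (Suc j) (l ! j))"
    by (simp add: sum_bitstrings_Suc prod.lessThan_Suc_shift sum_distrib_left del: prod.lessThan_Suc)
  also have "\<dots> = (\<Prod>j<Suc n. f j False + f j True)"
    using Suc[of "\<lambda>j. f (Suc j)"]
    by (simp add: prod.lessThan_Suc_shift distrib_right del: prod.lessThan_Suc)
  finally show ?case .
qed

lemma card_bitstrings: "card (bitstrings n) = 2 ^ n"
proof (induction n)
  case 0 then show ?case by (simp add: bitstrings_0)
next
  case (Suc n)
  have "card (bitstrings (Suc n)) = card (Cons False ` bitstrings n) + card (Cons True ` bitstrings n)"
    unfolding bitstrings_Suc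
    by (rule card_Un_disjoint) (auto simp: finite_bitstrings)
  also have "\<dots> = 2 ^ Suc n" using Suc by (simp add: card_image)
  finally show ?case .
qed

lemma hweight_Cons: "hweight (b # l) = (if b then Suc (hweight l) else hweight l)"
  by (simp add: hweight_def)

lemma card_parity:
  "card {i \<in> bitstrings (Suc m). even (hweight i) = b} = 2 ^ m"
proof -
  have "card {i \<in> bitstrings (Suc m). even (hweight i) = b} = card (
     Cons False ` {l \<in> bitstrings m. even (hweight l) = b} \<union>
     Cons True ` {l \<in> bitstrings m. even (hweight l) = (\<not> b)})"
    by (rule arg_cong[where f=card]) (auto simp: bitstrings_Suc hweight_Cons)
  also have "\<dots> =
     card {l \<in> bitstrings m. even (hweight l) = b} + card {l \<in> bitstrings m. even (hweight l) = (\<not> b)}"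
    by (subst card_Un_disjoint) (auto simp: finite_bitstrings card_image)
  also have "\<dots> = card ({l \<in> bitstrings m. even (hweight l) = b} \<union> {l \<in> bitstrings m. even (hweight l) = (\<not> b)})"
    by (subst card_Un_disjoint) (auto simp: finite_bitstrings)
  finally have calc: "card {i \<in> bitstrings (Suc m). even (hweight i) = b} = card ({l \<in> bitstrings m. even (hweight l) = b} \<union> {l \<in> bitstrings m. even (hweight l) = (\<not> b)})" .
  have U: "{l \<in> bitstrings m. even (hweight l) = b} \<union> {l \<in> bitstrings m. even (hweight l) = (\<not> b)} = bitstrings m"
    by auto
  show ?thesis using calc U by (simp add: card_bitstrings)
qed

lemma card_even_strings: "n \<ge> 1 \<Longrightarrow> card (even_strings n) = 2 ^ (n - 1)"
  using card_parity[of "n - 1" True] by (simp add: even_strings_def)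

lemma prod_hweight:
  fixes f :: "bool \<Rightarrow> 'a::comm_monoid_mult"
  assumes "f False = 1"
  shows "length i = n \<Longrightarrow> (\<Prod>j<n. f (i ! j)) = f True ^ hweight i"
proof (induction i arbitrary: n)
  case Nil then show ?case by (simp add: hweight_def)
next
  case (Cons a l)
  then obtain m where "n = Suc m" "length l = m" by auto
  then show ?case using Cons assms
    by (auto simp: prod.lessThan_Suc_shift hweight_Cons simp del: prod.lessThan_Suc)
qed

definition u :: "bool \<Rightarrow> complex" where "u b = (if b then \<i> else 1)"

lemma parity_split:
  "(if even w then complex_of_real ((-1) ^ (w div 2)) else 0) = (\<i> ^ w + (- \<i>) ^ w) / 2"
proof (cases "even w")
  case True
  then obtain m where w: "w = 2 * m" by blast
  have "\<i> ^ w = (-1) ^ m" "(- \<i>) ^ w = (-1) ^ m" unfolding w power_mult by simp_all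
  then show ?thesis using w by simp
next
  case False
  then obtain m where w: "w = 2 * m + 1" using oddE by blast
  have "\<i> ^ w = \<i> * (-1) ^ m" "(- \<i>) ^ w = - \<i> * (-1) ^ m" unfolding w power_add power_mult by simp_all
  then show ?thesis using False by simp
qed

lemma Psi_split:
  assumes "i \<in> bitstrings n"
  shows "Psi n i = complex_of_real (2 powr (- (real n - 1) / 2)) *
     ((\<Prod>j<n. u (i ! j)) + (\<Prod>j<n. cnj (u (i ! j)))) / 2"
proof -
  have l: "length i = n" using assms by (simp add: bitstrings_def)
  have "(\<Prod>j<n. u (i ! j)) = \<i> ^ hweight i"
    using prod_hweight[of u, OF _ l] by (simp add: u_def)
  moreover have "(\<Prod>j<n. cnj (u (i ! j))) = (- \<i>) ^ hweight i"
    using prod_hweight[of "\<lambda>b. cnj (u b)", OF _ l] by (simp add: u_def)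
  moreover have "Psi n i = complex_of_real (2 powr (- (real n - 1) / 2)) *
     (if even (hweight i) then complex_of_real ((-1) ^ (hweight i div 2)) else 0)"
    using assms by (simp add: Psi_def even_strings_def)
  ultimately show ?thesis by (simp add: parity_split)
qed

lemma eig1: "(\<Sum>c\<in>(UNIV::bool set). Emat \<theta> r c * u c) = cis \<theta> * u r"
  by (cases r) (auto simp: UNIV_bool Emat_def u_def complex_eq_iff)

lemma eig2: "(\<Sum>c\<in>(UNIV::bool set). Emat \<theta> r c * cnj (u c)) = cis (- \<theta>) * cnj (u r)"
  by (cases r) (auto simp: UNIV_bool Emat_def u_def complex_eq_iff)


definition kc :: "real \<Rightarrow> bool \<Rightarrow> bool \<Rightarrow> complex" where
  "kc \<eta> k r = (if k then complex_of_real (sqrt (1 - \<eta>)) * Zmat r r else complex_of_real (sqrt \<eta>))"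

lemma mZ: "matmul2 Zmat A r c = Zmat r r * A r c"
  by (cases r) (simp_all add: matmul2_def UNIV_bool Zmat_def)

lemma kraus_split: "kraus \<eta> \<theta> k r c = kc \<eta> k r * Emat \<theta> r c"
  by (simp add: kraus_def kc_def mZ)

lemma kt_split: "kraus_tensor \<eta> \<theta> n ks x i =
   (\<Prod>j<n. kc \<eta> (ks ! j) (x ! j)) * (\<Prod>j<n. Emat \<theta> (x ! j) (i ! j))"
  by (simp add: kraus_tensor_def kraus_split prod.distrib)

lemma kc_norm:
  assumes "0 \<le> \<eta>" "\<eta> \<le> 1"
  shows "kc \<eta> False r * cnj (kc \<eta> False r) + kc \<eta> True r * cnj (kc \<eta> True r) = 1"
proof -
  have a: "complex_of_real (sqrt \<eta>) * complex_of_real (sqrt \<eta>) = complex_of_real \<eta>"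
  proof -
    have "sqrt \<eta> * sqrt \<eta> = \<eta>" using assms by simp
    then show ?thesis by (simp only: of_real_mult[symmetric])
  qed
  have b: "complex_of_real (sqrt (1 - \<eta>)) * complex_of_real (sqrt (1 - \<eta>)) = complex_of_real (1 - \<eta>)"
  proof -
    have "sqrt (1 - \<eta>) * sqrt (1 - \<eta>) = 1 - \<eta>" using assms by simp
    then show ?thesis by (simp only: of_real_mult[symmetric])
  qed
  show ?thesis
    by (cases r) (auto simp: kc_def Zmat_def a b)
qed

lemma kc_sum:
  assumes "0 \<le> \<eta>" "\<eta> \<le> 1"
  shows "(\<Sum>ks\<in>bitstrings n. (\<Prod>j<n. kc \<eta> (ks ! j) (x ! j)) * cnj (\<Prod>j<n. kc \<eta> (ks ! j) (x ! j))) = 1"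
proof -
  have "(\<Sum>ks\<in>bitstrings n. (\<Prod>j<n. kc \<eta> (ks ! j) (x ! j)) * cnj (\<Prod>j<n. kc \<eta> (ks ! j) (x ! j)))
     = (\<Sum>ks\<in>bitstrings n. \<Prod>j<n. kc \<eta> (ks ! j) (x ! j) * cnj (kc \<eta> (ks ! j) (x ! j)))"
    by (simp add: prod.distrib)
  also have "\<dots> = (\<Prod>j<n. kc \<eta> False (x ! j) * cnj (kc \<eta> False (x ! j)) + kc \<eta> True (x ! j) * cnj (kc \<eta> True (x ! j)))"
    by (rule sum_prod_bitstrings)
  also have "\<dots> = 1" using kc_norm[OF assms] by simp
  finally show ?thesis .
qed

lemma channel_diag:
  assumes "0 \<le> \<eta>" "\<eta> \<le> 1"
  shows "channel_n \<eta> \<theta> n (proj \<psi>) x x =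
    (\<Sum>i\<in>bitstrings n. (\<Prod>j<n. Emat \<theta> (x ! j) (i ! j)) * \<psi> i) *
    cnj (\<Sum>i\<in>bitstrings n. (\<Prod>j<n. Emat \<theta> (x ! j) (i ! j)) * \<psi> i)"
proof -
  define a where "a ks = (\<Prod>j<n. kc \<eta> (ks ! j) (x ! j))" for ks
  define T where "T i = (\<Prod>j<n. Emat \<theta> (x ! j) (i ! j))" for i
  define S where "S = (\<Sum>i\<in>bitstrings n. T i * \<psi> i)"
  have tm: "(\<Sum>i\<in>bitstrings n. \<Sum>i'\<in>bitstrings n.
        kraus_tensor \<eta> \<theta> n ks x i * proj \<psi> i i' * cnj (kraus_tensor \<eta> \<theta> n ks x i'))
      = (a ks * cnj (a ks)) * (S * cnj S)" for ks
  proof -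
    have "(a ks * cnj (a ks)) * (S * cnj S) = (a ks * cnj (a ks)) *
        (\<Sum>i\<in>bitstrings n. \<Sum>i'\<in>bitstrings n. (T i * \<psi> i) * cnj (T i' * \<psi> i'))"
      unfolding S_def cnj_sum sum_product ..
    also have "\<dots> = (\<Sum>i\<in>bitstrings n. \<Sum>i'\<in>bitstrings n.
        kraus_tensor \<eta> \<theta> n ks x i * proj \<psi> i i' * cnj (kraus_tensor \<eta> \<theta> n ks x i'))"
      unfolding sum_distrib_left kt_split proj_def a_def[symmetric] T_def[symmetric]
      by (intro sum.cong refl) (simp only: complex_cnj_mult mult_ac)
    finally show ?thesis by simp
  qed
  have "channel_n \<eta> \<theta> n (proj \<psi>) x x = (\<Sum>ks\<in>bitstrings n. a ks * cnj (a ks)) * (S * cnj S)"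
    unfolding channel_n_def tm sum_distrib_right ..
  also have "(\<Sum>ks\<in>bitstrings n. a ks * cnj (a ks)) = 1"
    unfolding a_def by (rule kc_sum[OF assms])
  finally show ?thesis by (simp add: S_def T_def)
qed


lemma eig1': "Emat \<theta> r False * u False + Emat \<theta> r True * u True = cis \<theta> * u r"
  using eig1[of \<theta> r] by (simp add: UNIV_bool add.commute)

lemma eig2': "Emat \<theta> r False * cnj (u False) + Emat \<theta> r True * cnj (u True) = cis (- \<theta>) * cnj (u r)"
  using eig2[of \<theta> r] by (simp add: UNIV_bool add.commute)

lemma amp:
  assumes x: "x \<in> even_strings n"
  shows "(\<Sum>i\<in>bitstrings n. (\<Prod>j<n. Emat \<theta> (x ! j) (i ! j)) * Psi n i) =
    complex_of_real (2 powr (- (real n - 1) / 2) * (-1) ^ (hweight x div 2) * cos (real n * \<theta>))"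
proof -
  define c where "c = complex_of_real (2 powr (- (real n - 1) / 2))"
  have lx: "length x = n" and ev: "even (hweight x)" using x by (auto simp: even_strings_def bitstrings_def)
  then obtain m where m: "hweight x = 2 * m" by blast
  have "(\<Sum>i\<in>bitstrings n. (\<Prod>j<n. Emat \<theta> (x ! j) (i ! j)) * Psi n i) =
     (\<Sum>i\<in>bitstrings n. c / 2 * ((\<Prod>j<n. Emat \<theta> (x ! j) (i ! j) * u (i ! j)) +
        (\<Prod>j<n. Emat \<theta> (x ! j) (i ! j) * cnj (u (i ! j)))))"
    by (intro sum.cong refl) (simp add: Psi_split c_def prod.distrib algebra_simps)
  also have "\<dots> = c / 2 * ((\<Sum>i\<in>bitstrings n. \<Prod>j<n. Emat \<theta> (x ! j) (i ! j) * u (i ! j)) +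
        (\<Sum>i\<in>bitstrings n. \<Prod>j<n. Emat \<theta> (x ! j) (i ! j) * cnj (u (i ! j))))"
    by (simp only: distrib_left sum_distrib_left sum.distrib)
  also have "\<dots> = c / 2 * ((\<Prod>j<n. cis \<theta> * u (x ! j)) + (\<Prod>j<n. cis (- \<theta>) * cnj (u (x ! j))))"
    using sum_prod_bitstrings[of "\<lambda>j b. Emat \<theta> (x ! j) b * u b" n]
      sum_prod_bitstrings[of "\<lambda>j b. Emat \<theta> (x ! j) b * cnj (u b)" n]
    by (simp only: eig1' eig2')
  also have "\<dots> = c / 2 * (cis \<theta> ^ n * \<i> ^ hweight x + cis (- \<theta>) ^ n * (- \<i>) ^ hweight x)"
    using prod_hweight[of u, OF _ lx] prod_hweight[of "\<lambda>b. cnj (u b)", OF _ lx]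
    by (simp add: prod.distrib u_def)
  also have "\<dots> = c / 2 * (-1) ^ m * (cis (real n * \<theta>) + cis (- (real n * \<theta>)))"
    unfolding m power_mult DeMoivre by (simp add: algebra_simps)
  also have "cis (real n * \<theta>) + cis (- (real n * \<theta>)) = 2 * complex_of_real (cos (real n * \<theta>))"
    by (simp add: complex_eq_iff)
  finally show ?thesis by (simp add: c_def m)
qed

theorem mainTheorem4:
  fixes \<theta> \<eta> :: real and n :: nat
  assumes "0 \<le> \<theta>" "\<theta> \<le> pi / 2" "0 \<le> \<eta>" "\<eta> \<le> 1" "n \<ge> 1"
  shows "prob_even_parity n (channel_n \<eta> \<theta> n (proj (Psi n))) = (cos (real n * \<theta>))\<^sup>2"
proof -
  define c where "c = (2::real) powr (- (real n - 1) / 2)"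
  have c2: "c ^ 2 = 1 / 2 ^ (n - 1)"
  proof -
    have "c ^ 2 = 2 powr (- (real n - 1))"
      unfolding c_def power2_eq_square powr_add[symmetric] by simp
    also have "real n - 1 = real (n - 1)" using assms(5) by simp
    also have "(2::real) powr (- real (n - 1)) = 1 / 2 ^ (n - 1)"
      by (simp add: powr_minus powr_realpow divide_inverse)
    finally show ?thesis .
  qed
  have "prob_even_parity n (channel_n \<eta> \<theta> n (proj (Psi n))) =
     (\<Sum>x\<in>even_strings n. c ^ 2 * (cos (real n * \<theta>))\<^sup>2)"
    unfolding prob_even_parity_def
  proof (intro sum.cong refl)
    fix x assume x: "x \<in> even_strings n"
    have "((-1::real) ^ (hweight x div 2))\<^sup>2 = 1"
      by (simp add: power_even_eq[symmetric] power_mult_distrib[symmetric] power_mult[symmetric] power2_eq_square[symmetric]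
          flip: power_mult)
    then show "Re (channel_n \<eta> \<theta> n (proj (Psi n)) x x) = c ^ 2 * (cos (real n * \<theta>))\<^sup>2"
      unfolding channel_diag[OF assms(3,4)] amp[OF x] c_def[symmetric]
      by (simp add: power2_eq_square algebra_simps)
  qed
  also have "\<dots> = real (card (even_strings n)) * (c ^ 2 * (cos (real n * \<theta>))\<^sup>2)" by simp
  also have "\<dots> = (cos (real n * \<theta>))\<^sup>2"
    using card_even_strings[OF assms(5)] c2 by simp
  finally show ?thesis .
qed
end
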